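(* Let $D,n,r\ge 1$. For $0\le i<n$, let $X_{i}$ be the $(D+1)\times(D+1)$ matrix, with rows and columns indexed by $\{0,\dots,D\}$, whose $(k,\ell)$ entry is the commuting variable $x_{i,\ell}$ if $k+1=\ell$ and $0$ otherwise. Let $\mathcal{H}\subseteq\mathbb{F}^{\{x_{i,j}:0\le i<n,\,1\le j\le D\}}$ be a nonempty set of assignments to the commuting variables $x_{i,j}$ such that for every $1\le\ell\le D$, $\mathcal{H}$ is a hitting set for all polynomials computed by set-multilinear ABPs of width $\le r(D+1)$ and depth $\ell$ with respect to the variable partition $\bigsqcup_{j=1}^{\ell}\{x_{i,j}\}_{0\le i<n}$ (viewed as polynomials in all variables $x_{i,j}$). Let $\mathcal{H}'\subseteq(\mathbb{F}^{(D+1)\times(D+1)})^n$ be obtained by replacing each point $h\in\mathcal{H}$ by the tuple $(X_0(h),\dots,X_{n-1}(h))$ of the matrices $X_i$ with the variables evaluated at $h$. Then for every non-commutative polynomial $f\in\mathbb{F}\{x_0,\dots,x_{n-1}\}$ computed by a non-commutative ABP of width $\le r$ and depth $D$: $f$ is zero iff $f(A)$ is the zero matrix for every $A\in\mathcal{H}'$.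
   Context: $\mathbb{F}\{x_0,\dots,x_{n-1}\}$ denotes the ring of polynomials in non-commuting variables over $\mathbb{F}$. A (non-commutative) ABP of depth $D$ is a directed acyclic graph with vertices partitioned into layers $0,\dots,D$, a single source in layer $0$, a single sink in layer $D$, edges only from layer $i-1$ to layer $i$, each labeled by an affine linear form; it computes the sum over source-to-sink paths of the products of labels in path order; its width is the maximum number of vertices in a layer. A set-multilinear ABP of depth $\ell$ with respect to a partition $Y_1\sqcup\dots\sqcup Y_\ell$ is an ABP of depth $\ell$ in which every edge from layer $j-1$ to layer $j$ is labeled by a homogeneous linear form in $Y_j$. A set $\mathcal{H}$ is a hitting set for a class of polynomials if each polynomial in the class is zero iff it vanishes on all points of $\mathcal{H}$. Scalars $a\in\mathbb{F}$ act on matrices as $a\mathrm{I}$. *)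

theory Defs
  imports Main "HOL-Library.Poly_Mapping"
begin

datatype 'v ncword = NCWord (letters: "'v list")

instantiation ncword :: (type) monoid_add
begin
definition zero_ncword :: "'v ncword" where "zero_ncword = NCWord []"
definition plus_ncword :: "'v ncword \<Rightarrow> 'v ncword \<Rightarrow> 'v ncword" where
  "plus_ncword x y = NCWord (letters x @ letters y)"
instance
  by standard (auto simp: zero_ncword_def plus_ncword_def)
end

text \<open>Non-commutative polynomials F{x_v}: finitely supported coefficient functions
  on words; multiplication is the convolution product (concatenation of words).\<close>
type_synonym ('v, 'a) ncpoly = "'v ncword \<Rightarrow>\<^sub>0 'a"

definition ncvar :: "'v \<Rightarrow> ('v, 'a::ring_1) ncpoly" where
  "ncvar v = Poly_Mapping.single (NCWord [v]) 1"

definition ncconst :: "'a::ring_1 \<Rightarrow> ('v, 'a) ncpoly" where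
  "ncconst c = Poly_Mapping.single 0 c"

type_synonym ('v, 'a) cpoly = "('v \<Rightarrow>\<^sub>0 nat) \<Rightarrow>\<^sub>0 'a"

definition cvar :: "'v \<Rightarrow> ('v, 'a::comm_ring_1) cpoly" where
  "cvar v = Poly_Mapping.single (Poly_Mapping.single v 1) 1"

definition ceval :: "('v, 'a::comm_ring_1) cpoly \<Rightarrow> ('v \<Rightarrow> 'a) \<Rightarrow> 'a" where
  "ceval p h = (\<Sum>mon\<in>Poly_Mapping.keys p. Poly_Mapping.lookup p mon * (\<Prod>x\<in>Poly_Mapping.keys mon. h x ^ Poly_Mapping.lookup mon x))"

definition hitting_set :: "('v \<Rightarrow> 'a) set \<Rightarrow> ('v, 'a::comm_ring_1) cpoly set \<Rightarrow> bool" where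
  "hitting_set H C \<longleftrightarrow> (\<forall>g\<in>C. g = 0 \<longleftrightarrow> (\<forall>h\<in>H. ceval g h = 0))"

type_synonym 'a sqmat = "nat \<Rightarrow> nat \<Rightarrow> 'a"

definition mat_mult :: "nat \<Rightarrow> 'a::semiring_0 sqmat \<Rightarrow> 'a sqmat \<Rightarrow> 'a sqmat" where
  "mat_mult m A B = (\<lambda>i k. \<Sum>j<m. A i j * B j k)"

definition mat_id :: "'a::{zero,one} sqmat" where
  "mat_id = (\<lambda>i k. if i = k then 1 else 0)"

definition is_zero_mat :: "nat \<Rightarrow> 'a::zero sqmat \<Rightarrow> bool" where
  "is_zero_mat m M \<longleftrightarrow> (\<forall>i<m. \<forall>k<m. M i k = 0)"

definition word_mat :: "nat \<Rightarrow> ('v \<Rightarrow> 'a::semiring_1 sqmat) \<Rightarrow> 'v ncword \<Rightarrow> 'a sqmat" where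
  "word_mat m A w = foldr (\<lambda>v M. mat_mult m (A v) M) (letters w) mat_id"

definition nc_eval :: "nat \<Rightarrow> ('v \<Rightarrow> 'a::semiring_1 sqmat) \<Rightarrow> ('v, 'a) ncpoly \<Rightarrow> 'a sqmat" where
  "nc_eval m A f = (\<lambda>i k. \<Sum>w\<in>Poly_Mapping.keys f. Poly_Mapping.lookup f w * word_mat m A w i k)"

text \<open>An ABP of depth D: layer j has vertices 0..<wd j; the edge from vertex u of layer j-1
  to vertex v of layer j carries label lab j u v (label 0 = no edge).
  Paths are vertex sequences p!0, ..., p!D.\<close>
definition abp_paths :: "nat \<Rightarrow> (nat \<Rightarrow> nat) \<Rightarrow> nat list set" where
  "abp_paths D wd = {p. length p = Suc D \<and> (\<forall>j\<le>D. p ! j < wd j)}"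

definition abp_poly :: "nat \<Rightarrow> (nat \<Rightarrow> nat) \<Rightarrow> (nat \<Rightarrow> nat \<Rightarrow> nat \<Rightarrow> 'p::ring_1) \<Rightarrow> 'p" where
  "abp_poly D wd lab =
     (\<Sum>p\<in>abp_paths D wd. prod_list (map (\<lambda>j. lab j (p ! (j - 1)) (p ! j)) [1..<Suc D]))"

definition abp_shape :: "nat \<Rightarrow> nat \<Rightarrow> (nat \<Rightarrow> nat) \<Rightarrow> bool" where
  "abp_shape r D wd \<longleftrightarrow> wd 0 = 1 \<and> wd D = 1 \<and> (\<forall>j\<le>D. wd j \<le> r)"

definition affine_nc :: "nat \<Rightarrow> 'a \<times> (nat \<Rightarrow> 'a) \<Rightarrow> (nat, 'a::ring_1) ncpoly" where
  "affine_nc n ca = ncconst (fst ca) + (\<Sum>i<n. Poly_Mapping.single (NCWord [i]) (snd ca i))"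

definition nc_abp_computes :: "nat \<Rightarrow> nat \<Rightarrow> nat \<Rightarrow> (nat, 'a::ring_1) ncpoly \<Rightarrow> bool" where
  "nc_abp_computes n r D f \<longleftrightarrow>
     (\<exists>wd (L :: nat \<Rightarrow> nat \<Rightarrow> nat \<Rightarrow> 'a \<times> (nat \<Rightarrow> 'a)).
        abp_shape r D wd \<and> f = abp_poly D wd (\<lambda>j u v. affine_nc n (L j u v)))"

text \<open>Set-multilinear ABPs of width \<le> wmax and depth l w.r.t. the partition
  Y_j = {x_(i,j) : i < n}, j = 1..l: edges into layer j carry homogeneous linear forms
  sum_{i<n} a_i x_(i,j).\<close>
definition sml_abp_polys :: "nat \<Rightarrow> nat \<Rightarrow> nat \<Rightarrow> (nat \<times> nat, 'a::comm_ring_1) cpoly set" where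
  "sml_abp_polys n wmax l =
     {g. \<exists>wd (L :: nat \<Rightarrow> nat \<Rightarrow> nat \<Rightarrow> nat \<Rightarrow> 'a).
        abp_shape wmax l wd \<and>
        g = abp_poly l wd (\<lambda>j u v. \<Sum>i<n. Poly_Mapping.single (Poly_Mapping.single (i, j) 1) (L j u v i))}"

definition Xmat :: "nat \<Rightarrow> (nat \<times> nat \<Rightarrow> 'a::zero) \<Rightarrow> nat \<Rightarrow> 'a sqmat" where
  "Xmat D h i = (\<lambda>k l. if k \<le> D \<and> l \<le> D \<and> k + 1 = l then h (i, l) else 0)"

end

theory Submission
  imports Defs
begin


primrec fw :: "(nat \<Rightarrow> nat) \<Rightarrow> (nat \<Rightarrow> nat \<Rightarrow> nat \<Rightarrow> 'p::ring_1) \<Rightarrow> nat \<Rightarrow> nat \<Rightarrow> 'p" where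
  "fw wd lab 0 v = (if v = 0 then 1 else 0)"
| "fw wd lab (Suc j) v = (\<Sum>u<wd j. fw wd lab j u * lab (Suc j) u v)"

lemma abp_paths_Suc:
  "abp_paths (Suc j) wd = (\<lambda>(q,v). q @ [v]) ` (abp_paths j wd \<times> {..<wd (Suc j)})"
proof (intro set_eqI iffI)
  fix p assume p: "p \<in> abp_paths (Suc j) wd"
  then have l: "length p = Suc (Suc j)" by (simp add: abp_paths_def)
  have "p = butlast p @ [last p]" using l
    by (metis append_butlast_last_id list.size(3) nat.distinct(1))
  moreover have "butlast p \<in> abp_paths j wd" using p l
    by (auto simp: abp_paths_def nth_butlast)
  moreover have "last p < wd (Suc j)" using p l
  proof -
    have "last p = p ! Suc j" using l by (metis diff_Suc_1 last_conv_nth list.size(3) nat.distinct(1))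
    then show ?thesis using p by (simp add: abp_paths_def)
  qed
  ultimately show "p \<in> (\<lambda>(q,v). q @ [v]) ` (abp_paths j wd \<times> {..<wd (Suc j)})"
    by (metis (no_types, lifting) SigmaI case_prod_conv image_eqI lessThan_iff)
next
  fix p assume "p \<in> (\<lambda>(q,v). q @ [v]) ` (abp_paths j wd \<times> {..<wd (Suc j)})"
  then obtain q v where "p = q @ [v]" "q \<in> abp_paths j wd" "v < wd (Suc j)" by auto
  then show "p \<in> abp_paths (Suc j) wd"
    by (auto simp: abp_paths_def nth_append le_Suc_eq)
qed

lemma abp_paths_0: "abp_paths 0 wd = (\<lambda>v. [v]) ` {..<wd 0}"
  apply (auto simp: abp_paths_def)
  by (metis (no_types, lifting) Suc_length_conv image_iff length_0_conv lessThan_iff nth_Cons_0)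

lemma finite_abp_paths: "finite (abp_paths j wd)"
  by (induction j) (auto simp: abp_paths_Suc abp_paths_0)

lemma path_sum_gen:
  fixes lab :: "nat \<Rightarrow> nat \<Rightarrow> nat \<Rightarrow> 'p::ring_1"
  assumes "wd 0 = 1"
  shows "(\<Sum>p\<in>abp_paths j wd. prod_list (map (\<lambda>i. lab i (p ! (i - 1)) (p ! i)) [1..<Suc j]) * g (p ! j))
       = (\<Sum>v<wd j. fw wd lab j v * g v)"
proof (induction j arbitrary: g)
  case 0
  have "(\<Sum>p\<in>(\<lambda>a. [a]) ` {..<Suc 0}. g (p ! 0)) = g 0" by (simp add: lessThan_Suc)
  then show ?case using assms by (simp add: abp_paths_0)
next
  case (Suc j)
  have inj: "inj_on (\<lambda>(q,v). q @ [v]) (abp_paths j wd \<times> {..<wd (Suc j)})"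
    by (auto simp: inj_on_def)
  have len: "\<And>q. q \<in> abp_paths j wd \<Longrightarrow> length q = Suc j" by (simp add: abp_paths_def)
  have pl: "\<And>q v. q \<in> abp_paths j wd \<Longrightarrow>
     prod_list (map (\<lambda>i. lab i ((q@[v]) ! (i - 1)) ((q@[v]) ! i)) [1..<Suc (Suc j)])
     = prod_list (map (\<lambda>i. lab i (q ! (i - 1)) (q ! i)) [1..<Suc j]) * lab (Suc j) (q ! j) v"
  proof -
    fix q v assume q: "q \<in> abp_paths j wd"
    have meq: "map (\<lambda>i. lab i ((q@[v]) ! (i - 1)) ((q@[v]) ! i)) [1..<Suc j]
        = map (\<lambda>i. lab i (q ! (i - 1)) (q ! i)) [1..<Suc j]"
      using len[OF q] by (auto simp: nth_append)
    have ml: "map (\<lambda>i. lab i ((q@[v]) ! (i - 1)) ((q@[v]) ! i)) [Suc j] = [lab (Suc j) (q ! j) v]"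
      using len[OF q] by (simp add: nth_append)
    have e: "[1..<Suc (Suc j)] = [1..<Suc j] @ [Suc j]" by simp
    show "?thesis q v" unfolding e map_append prod_list.append meq ml by simp
  qed
  have nv: "\<And>q v. q \<in> abp_paths j wd \<Longrightarrow> (q@[v]) ! Suc j = v" by (metis len nth_append_length)
  have "(\<Sum>p\<in>abp_paths (Suc j) wd. prod_list (map (\<lambda>i. lab i (p ! (i - 1)) (p ! i)) [1..<Suc (Suc j)]) * g (p ! Suc j))
     = (\<Sum>(q,v)\<in>abp_paths j wd \<times> {..<wd (Suc j)}. prod_list (map (\<lambda>i. lab i (q ! (i - 1)) (q ! i)) [1..<Suc j]) * (lab (Suc j) (q ! j) v * g v))"
    unfolding abp_paths_Suc
  proof (subst sum.reindex[OF inj], rule sum.cong[OF refl])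
    fix x assume "x \<in> abp_paths j wd \<times> {..<wd (Suc j)}"
    then obtain q v where x: "x = (q,v)" "q \<in> abp_paths j wd" by auto
    show "((\<lambda>p. prod_list (map (\<lambda>i. lab i (p ! (i - 1)) (p ! i)) [1..<Suc (Suc j)]) * g (p ! Suc j)) \<circ> (\<lambda>(q,v). q @ [v])) x =
      (\<lambda>(q,v). prod_list (map (\<lambda>i. lab i (q ! (i - 1)) (q ! i)) [1..<Suc j]) * (lab (Suc j) (q ! j) v * g v)) x"
      unfolding x by (simp only: comp_def case_prod_conv pl[OF x(2)] nv[OF x(2)] mult.assoc)
  qed
  also have "\<dots> = (\<Sum>q\<in>abp_paths j wd. prod_list (map (\<lambda>i. lab i (q ! (i - 1)) (q ! i)) [1..<Suc j]) * (\<Sum>v<wd (Suc j). lab (Suc j) (q ! j) v * g v))"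
    by (simp add: sum.cartesian_product[symmetric] sum_distrib_left)
  also have "\<dots> = (\<Sum>u<wd j. fw wd lab j u * (\<Sum>v<wd (Suc j). lab (Suc j) u v * g v))"
    by (rule Suc.IH)
  also have "\<dots> = (\<Sum>v<wd (Suc j). fw wd lab (Suc j) v * g v)"
    by (simp add: sum_distrib_left sum_distrib_right mult.assoc sum.swap[of _ "{..<wd j}"])
  finally show ?case .
qed

lemma abp_poly_fw:
  assumes "wd 0 = 1" "wd D = 1"
  shows "abp_poly D wd lab = fw wd lab D 0"
  using path_sum_gen[where lab=lab and wd=wd and j=D and g="\<lambda>_. 1", OF assms(1)] assms(2)
  by (simp add: abp_poly_def)



definition mon :: "nat ncword \<Rightarrow> (nat \<times> nat) \<Rightarrow>\<^sub>0 nat" where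
  "mon w = (\<Sum>t<length (letters w). Poly_Mapping.single (letters w ! t, Suc t) 1)"

definition Phi1 :: "nat \<Rightarrow> nat ncword \<Rightarrow> 'a::comm_ring_1 \<Rightarrow> (nat \<times> nat, 'a) cpoly" where
  "Phi1 k w c = (if length (letters w) = k then Poly_Mapping.single (mon w) c else 0)"

definition Phi :: "nat \<Rightarrow> (nat, 'a::comm_ring_1) ncpoly \<Rightarrow> (nat \<times> nat, 'a) cpoly" where
  "Phi k g = (\<Sum>w\<in>Poly_Mapping.keys g. Phi1 k w (Poly_Mapping.lookup g w))"

definition lin :: "nat \<Rightarrow> nat \<Rightarrow> (nat \<Rightarrow> 'a::comm_ring_1) \<Rightarrow> (nat \<times> nat, 'a) cpoly" where
  "lin n j \<alpha> = (\<Sum>i<n. Poly_Mapping.single (Poly_Mapping.single (i, j) 1) (\<alpha> i))"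

lemma Phi1_0[simp]: "Phi1 k w 0 = 0" by (simp add: Phi1_def)

lemma Phi1_add: "Phi1 k w (a + b) = Phi1 k w a + Phi1 k w b"
  by (simp add: Phi1_def single_add)

lemma Phi_superset:
  assumes "finite S" "Poly_Mapping.keys g \<subseteq> S"
  shows "Phi k g = (\<Sum>w\<in>S. Phi1 k w (Poly_Mapping.lookup g w))"
  unfolding Phi_def using assms
  by (intro sum.mono_neutral_left) (auto simp: in_keys_iff)

lemma Phi_add: "Phi k (g + g') = Phi k g + Phi k g'"
proof -
  let ?S = "Poly_Mapping.keys g \<union> Poly_Mapping.keys g'"
  have "Phi k (g+g') = (\<Sum>w\<in>?S. Phi1 k w (Poly_Mapping.lookup (g+g') w))"
    by (rule Phi_superset) (auto simp: keys_add)
  also have "\<dots> = (\<Sum>w\<in>?S. Phi1 k w (Poly_Mapping.lookup g w)) + (\<Sum>w\<in>?S. Phi1 k w (Poly_Mapping.lookup g' w))"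
    by (simp add: lookup_add Phi1_add sum.distrib)
  also have "\<dots> = Phi k g + Phi k g'"
    by (subst (1 2) Phi_superset[of ?S]) auto
  finally show ?thesis .
qed

lemma Phi_zero[simp]: "Phi k 0 = 0" by (simp add: Phi_def)

lemma Phi_sum: "finite A \<Longrightarrow> Phi k (\<Sum>x\<in>A. g x) = (\<Sum>x\<in>A. Phi k (g x))"
  by (induction A rule: finite_induct) (auto simp: Phi_add)

lemma Phi_single: "Phi k (Poly_Mapping.single w c) = Phi1 k w c"
  by (cases "c = 0") (auto simp: Phi_def)

lemma pm_expand: "g = (\<Sum>w\<in>Poly_Mapping.keys g. Poly_Mapping.single w (Poly_Mapping.lookup g w))"
proof (rule poly_mapping_eqI)
  fix k
  have "(\<Sum>w\<in>Poly_Mapping.keys g. Poly_Mapping.lookup (Poly_Mapping.single w (Poly_Mapping.lookup g w)) k)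
      = (\<Sum>w\<in>Poly_Mapping.keys g. if w = k then Poly_Mapping.lookup g w else 0)"
    by (intro sum.cong) (auto simp: lookup_single when_def)
  also have "\<dots> = Poly_Mapping.lookup g k" by (simp add: sum.delta' in_keys_iff)
  finally show "Poly_Mapping.lookup g k = Poly_Mapping.lookup (\<Sum>w\<in>Poly_Mapping.keys g. Poly_Mapping.single w (Poly_Mapping.lookup g w)) k"
    by (simp add: lookup_sum)
qed

lemma Phi_mult_single:
  "Phi k (g * Poly_Mapping.single w' a) = (\<Sum>w\<in>Poly_Mapping.keys g. Phi1 k (w + w') (Poly_Mapping.lookup g w * a))"
proof -
  have "g * Poly_Mapping.single w' a = (\<Sum>w\<in>Poly_Mapping.keys g. Poly_Mapping.single (w + w') (Poly_Mapping.lookup g w * a))"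
    by (subst pm_expand[of g]) (simp add: sum_distrib_right mult_single)
  then show ?thesis by (simp add: Phi_sum Phi_single)
qed

lemma letters_plus[simp]: "letters (w + w') = letters w @ letters w'"
  by (simp add: plus_ncword_def)

lemma letters_zero[simp]: "letters 0 = []"
  by (simp add: zero_ncword_def)

lemma mon_snoc: "mon (w + NCWord [i]) = mon w + Poly_Mapping.single (i, Suc (length (letters w))) 1"
proof -
  have "mon (w + NCWord [i]) = (\<Sum>t<Suc (length (letters w)). Poly_Mapping.single ((letters w @ [i]) ! t, Suc t) 1)"
    by (simp add: mon_def)
  also have "\<dots> = (\<Sum>t<length (letters w). Poly_Mapping.single ((letters w @ [i]) ! t, Suc t) 1)
        + Poly_Mapping.single (i, Suc (length (letters w))) 1"
    by (simp add: sum.lessThan_Suc)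
  also have "(\<Sum>t<length (letters w). Poly_Mapping.single ((letters w @ [i]) ! t, Suc t) 1) = mon w"
    unfolding mon_def by (intro sum.cong) (auto simp: nth_append)
  finally show ?thesis .
qed

lemma Phi_mult_const:
  "Phi k (g * ncconst a) = Phi k g * Poly_Mapping.single 0 a"
  unfolding ncconst_def Phi_mult_single
  by (auto simp: Phi_def sum_distrib_right Phi1_def mult_single intro!: sum.cong)

lemma Phi1_var:
  "Phi1 k (w + NCWord [i]) (c * a) =
     (if k = 0 then 0 else Phi1 (k - 1) w c * Poly_Mapping.single (Poly_Mapping.single (i, k) 1) a)"
  by (auto simp: Phi1_def mult_single mon_snoc)

lemma Phi_mult_var:
  "Phi k (g * Poly_Mapping.single (NCWord [i]) a) =
     (if k = 0 then 0 else Phi (k - 1) g * Poly_Mapping.single (Poly_Mapping.single (i, k) 1) a)"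
  unfolding Phi_mult_single Phi1_var
  by (simp add: Phi_def sum_distrib_right)

lemma Phi_affine:
  "Phi k (g * affine_nc n ca) = Phi k g * Poly_Mapping.single 0 (fst ca)
      + (if k = 0 then 0 else Phi (k - 1) g * lin n k (snd ca))"
  unfolding affine_nc_def
  by (simp add: distrib_left sum_distrib_left Phi_add Phi_sum Phi_mult_const Phi_mult_var lin_def)

lemma Phi_one: "Phi k (1::(nat,'a::comm_ring_1) ncpoly) = (if k = 0 then 1 else 0)"
proof -
  have "(1::(nat,'a) ncpoly) = Poly_Mapping.single 0 1" by simp
  then have "Phi k (1::(nat,'a) ncpoly) = Phi1 k 0 (1::'a)" by (metis Phi_single)
  then show ?thesis by (simp add: Phi1_def mon_def)
qed

definition ev :: "('v \<Rightarrow>\<^sub>0 nat) \<Rightarrow> ('v \<Rightarrow> 'a::comm_ring_1) \<Rightarrow> 'a" where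
  "ev m h = (\<Prod>x\<in>Poly_Mapping.keys m. h x ^ Poly_Mapping.lookup m x)"

lemma ceval_superset:
  assumes "finite S" "Poly_Mapping.keys p \<subseteq> S"
  shows "ceval p h = (\<Sum>m\<in>S. Poly_Mapping.lookup p m * ev m h)"
  unfolding ceval_def ev_def[symmetric] using assms
  by (intro sum.mono_neutral_left) (auto simp: in_keys_iff)

lemma ceval_add: "ceval (p + q) h = ceval p h + ceval q h"
proof -
  let ?S = "Poly_Mapping.keys p \<union> Poly_Mapping.keys q"
  have "ceval (p+q) h = (\<Sum>m\<in>?S. Poly_Mapping.lookup (p+q) m * ev m h)"
    by (rule ceval_superset) (auto simp: keys_add)
  also have "\<dots> = (\<Sum>m\<in>?S. Poly_Mapping.lookup p m * ev m h) + (\<Sum>m\<in>?S. Poly_Mapping.lookup q m * ev m h)"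
    by (simp add: lookup_add distrib_right sum.distrib)
  also have "\<dots> = ceval p h + ceval q h"
    by (subst (1 2) ceval_superset[of ?S]) auto
  finally show ?thesis .
qed

lemma ceval_zero[simp]: "ceval 0 h = 0" by (simp add: ceval_def)

lemma ceval_sum: "finite A \<Longrightarrow> ceval (\<Sum>x\<in>A. g x) h = (\<Sum>x\<in>A. ceval (g x) h)"
  by (induction A rule: finite_induct) (auto simp: ceval_add)

lemma ceval_single: "ceval (Poly_Mapping.single m c) h = c * ev m h"
  by (cases "c = 0") (auto simp: ceval_def ev_def)


lemma aux1: "Poly_Mapping.lookup (Poly_Mapping.single (a::nat, Suc t) (1::nat)) (i, s) =
   (if t = s - 1 \<and> 0 < s \<and> a = i then 1 else 0)"
  by (simp add: lookup_single when_def) linarith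

lemma lookup_mon:
  "Poly_Mapping.lookup (mon w) (i, s) =
     (if 0 < s \<and> s \<le> length (letters w) \<and> letters w ! (s - 1) = i then 1 else 0)"
proof -
  define c :: nat where "c = (if 0 < s \<and> letters w ! (s - 1) = i then 1 else 0)"
  have "Poly_Mapping.lookup (mon w) (i, s) =
      (\<Sum>t<length (letters w). if t = s - 1 then c else 0)"
    unfolding mon_def lookup_sum aux1 c_def by (intro sum.cong refl) auto
  also have "\<dots> = (if s - 1 < length (letters w) then c else 0)"
    by (simp add: sum.delta)
  also have "\<dots> = (if 0 < s \<and> s \<le> length (letters w) \<and> letters w ! (s - 1) = i then 1 else 0)"
    unfolding c_def by (cases s) simp_all
  finally show ?thesis .
qed
lemma keys_mon: "Poly_Mapping.keys (mon w) = (\<lambda>t. (letters w ! t, Suc t)) ` {..<length (letters w)}"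
proof (intro set_eqI iffI)
  fix x assume "x \<in> Poly_Mapping.keys (mon w)"
  then obtain i s where x: "x = (i, s)" "Poly_Mapping.lookup (mon w) (i, s) \<noteq> 0"
    by (metis in_keys_iff surj_pair)
  then have "0 < s" "s \<le> length (letters w)" "letters w ! (s - 1) = i"
    by (auto simp: lookup_mon split: if_splits)
  then show "x \<in> (\<lambda>t. (letters w ! t, Suc t)) ` {..<length (letters w)}"
    using x by (intro image_eqI[of _ _ "s - 1"]) auto
next
  fix x assume "x \<in> (\<lambda>t. (letters w ! t, Suc t)) ` {..<length (letters w)}"
  then show "x \<in> Poly_Mapping.keys (mon w)"
    by (auto simp: in_keys_iff lookup_mon)
qed

lemma ev_mon: "ev (mon w) h = (\<Prod>t<length (letters w). h (letters w ! t, Suc t))"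
proof -
  have inj: "inj_on (\<lambda>t. (letters w ! t, Suc t)) {..<length (letters w)}"
    by (auto simp: inj_on_def)
  show ?thesis unfolding ev_def keys_mon
    by (subst prod.reindex[OF inj]) (auto simp: lookup_mon intro!: prod.cong)
qed

lemma mon_inj:
  assumes "length (letters w) = length (letters w')" "mon w = mon w'"
  shows "w = w'"
proof -
  have "letters w = letters w'"
  proof (rule nth_equalityI)
    fix t assume t: "t < length (letters w)"
    have "Poly_Mapping.lookup (mon w') (letters w ! t, Suc t) = 1"
      using t assms(2)[symmetric] by (simp add: lookup_mon)
    then show "letters w ! t = letters w' ! t"
      by (simp add: lookup_mon split: if_splits)
  qed (use assms in auto)
  then show ?thesis by (cases w, cases w') auto
qed

lemma lookup_Phi_mon:
  assumes "length (letters w) = k"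
  shows "Poly_Mapping.lookup (Phi k g) (mon w) = Poly_Mapping.lookup g w"
proof -
  have "Poly_Mapping.lookup (Phi k g) (mon w) =
      (\<Sum>w'\<in>Poly_Mapping.keys g. if w' = w then Poly_Mapping.lookup g w' else 0)"
    unfolding Phi_def lookup_sum
    using assms mon_inj by (intro sum.cong) (auto simp: Phi1_def lookup_single when_def)
  also have "\<dots> = Poly_Mapping.lookup g w" by (simp add: sum.delta' in_keys_iff)
  finally show ?thesis .
qed

lemma ceval_Phi:
  "ceval (Phi k g) h = (\<Sum>w\<in>Poly_Mapping.keys g.
     if length (letters w) = k then Poly_Mapping.lookup g w * (\<Prod>t<k. h (letters w ! t, Suc t)) else 0)"
  unfolding Phi_def by (auto simp: ceval_sum Phi1_def ceval_single ev_mon intro!: sum.cong)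

lemma word_mat_X:
  assumes "a \<le> D"
  shows "word_mat (D+1) (\<lambda>i. Xmat D h i) (NCWord ws) a b =
    (if b = a + length ws \<and> b \<le> D then (\<Prod>t<length ws. h (ws ! t, a + Suc t)) else 0)"
  using assms
proof (induction ws arbitrary: a)
  case Nil
  then show ?case by (simp add: word_mat_def mat_id_def)
next
  case (Cons v ws)
  define M where "M = foldr (\<lambda>v M. mat_mult (D+1) (Xmat D h v) M) ws mat_id"
  have IH: "\<And>a. a \<le> D \<Longrightarrow> M a b = (if b = a + length ws \<and> b \<le> D then (\<Prod>t<length ws. h (ws ! t, a + Suc t)) else 0)"
    using Cons.IH unfolding M_def word_mat_def by simp
  have "word_mat (D+1) (\<lambda>i. Xmat D h i) (NCWord (v # ws)) a b = (\<Sum>j<D+1. Xmat D h v a j * M j b)"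
    by (simp add: word_mat_def M_def mat_mult_def)
  also have "\<dots> = (\<Sum>j<D+1. if j = a + 1 then (if a + 1 \<le> D then h (v, a+1) * M (a+1) b else 0) else 0)"
    using Cons.prems by (intro sum.cong) (auto simp: Xmat_def)
  also have "\<dots> = (if a + 1 \<le> D then h (v, a+1) * M (a+1) b else 0)"
    by (simp add: sum.delta)
  also have "\<dots> = (if b = a + length (v # ws) \<and> b \<le> D then (\<Prod>t<length (v # ws). h ((v # ws) ! t, a + Suc t)) else 0)"
  proof (cases "a + 1 \<le> D")
    case True
    show ?thesis using IH[OF True] True
      by (simp del: prod.lessThan_Suc add: prod.lessThan_Suc_shift algebra_simps)
  next
    case False
    then show ?thesis by auto
  qed
  finally show ?case .
qed

lemma entry_Phi:
  assumes "k \<le> D"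
  shows "nc_eval (D+1) (\<lambda>i. Xmat D h i) f 0 k = ceval (Phi k f) h"
  unfolding nc_eval_def ceval_Phi
proof (intro sum.cong refl)
  fix w :: "nat ncword"
  have "word_mat (D+1) (\<lambda>i. Xmat D h i) w 0 k = word_mat (D+1) (\<lambda>i. Xmat D h i) (NCWord (letters w)) 0 k"
    by simp
  also have "\<dots> = (if length (letters w) = k then (\<Prod>t<k. h (letters w ! t, Suc t)) else 0)"
    using assms by (subst word_mat_X) auto
  finally show "Poly_Mapping.lookup f w * word_mat (D+1) (\<lambda>i. Xmat D h i) w 0 k =
     (if length (letters w) = k then Poly_Mapping.lookup f w * (\<Prod>t<k. h (letters w ! t, Suc t)) else 0)"
    by simp
qed



lemma sum_div_mod: fixes g :: "nat \<Rightarrow> 'b::comm_monoid_add" shows "(\<Sum>e<m*r. g e) = (\<Sum>s<m. \<Sum>u<r. g (s*r+u))"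
proof -
  have "(\<Sum>e<m*r. g e) = (\<Sum>s<m. sum g {s*r..<s*r+r})"
    using sum.nat_group[of g r m] by simp
  also have "\<dots> = (\<Sum>s<m. \<Sum>u<r. g (s*r+u))"
  proof (rule sum.cong[OF refl])
    fix s
    have "sum g {0 + s*r..<r + s*r} = sum (g \<circ> plus (s*r)) {0..<r}"
      by (rule sum.atLeastLessThan_shift_bounds)
    then show "sum g {s*r..<s*r+r} = (\<Sum>u<r. g (s*r+u))"
      by (simp add: atLeast0LessThan comp_def add.commute)
  qed
  finally show ?thesis .
qed

lemma lin_zero[simp]: "lin n j (\<lambda>i. 0) = 0"
  by (simp add: lin_def)

lemma cc_lin: "Poly_Mapping.single 0 c * lin n j \<alpha> = lin n j (\<lambda>i. c * \<alpha> i)"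
  by (simp add: lin_def sum_distrib_left mult_single)

lemma sum_lin: "(\<Sum>w\<in>W. lin n j (\<alpha> w)) = lin n j (\<lambda>i. \<Sum>w\<in>W. \<alpha> w i)"
proof (cases "finite W")
  case True
  then show ?thesis
    by (induction W rule: finite_induct) (simp_all add: lin_def sum.distrib single_add)
next
  case False then show ?thesis by (simp add: lin_def)
qed

lemma cc_sum: "Poly_Mapping.single k (\<Sum>w\<in>W. f w) = (\<Sum>w\<in>W. Poly_Mapping.single k (f w))"
proof (cases "finite W")
  case True
  then show ?thesis
    by (induction W rule: finite_induct) (simp_all add: single_add)
next
  case False then show ?thesis by simp
qed

lemma cc_mult: "Poly_Mapping.single (0::'k::monoid_add) (a * b) = Poly_Mapping.single 0 a * Poly_Mapping.single 0 b"
  by (simp add: mult_single)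

lemma quad_swap:
  "(\<Sum>s\<in>A. \<Sum>u\<in>B s. \<Sum>s0\<in>C. \<Sum>u0\<in>E s0. T s u s0 u0) = (\<Sum>s0\<in>C. \<Sum>u0\<in>E s0. \<Sum>s\<in>A. \<Sum>u\<in>B s. T s u s0 u0)"
proof -
  have "(\<Sum>s\<in>A. \<Sum>u\<in>B s. \<Sum>s0\<in>C. \<Sum>u0\<in>E s0. T s u s0 u0) = (\<Sum>s\<in>A. \<Sum>s0\<in>C. \<Sum>u\<in>B s. \<Sum>u0\<in>E s0. T s u s0 u0)"
    by (rule sum.cong[OF refl], rule sum.swap)
  also have "\<dots> = (\<Sum>s0\<in>C. \<Sum>s\<in>A. \<Sum>u\<in>B s. \<Sum>u0\<in>E s0. T s u s0 u0)"
    by (rule sum.swap)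
  also have "\<dots> = (\<Sum>s0\<in>C. \<Sum>s\<in>A. \<Sum>u0\<in>E s0. \<Sum>u\<in>B s. T s u s0 u0)"
    by (rule sum.cong[OF refl], rule sum.cong[OF refl], rule sum.swap)
  also have "\<dots> = (\<Sum>s0\<in>C. \<Sum>u0\<in>E s0. \<Sum>s\<in>A. \<Sum>u\<in>B s. T s u s0 u0)"
    by (rule sum.cong[OF refl], rule sum.swap)
  finally show ?thesis .
qed

locale homog =
  fixes n r D :: nat and wd :: "nat \<Rightarrow> nat" and L :: "nat \<Rightarrow> nat \<Rightarrow> nat \<Rightarrow> 'a::field \<times> (nat \<Rightarrow> 'a)"
  assumes wd0: "wd 0 = 1" and wdD: "wd D = 1" and wdr: "\<forall>j\<le>D. wd j \<le> r" and r1: "1 \<le> r"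
begin

definition P :: "nat \<Rightarrow> nat \<Rightarrow> (nat, 'a) ncpoly" where
  "P = fw wd (\<lambda>j u v. affine_nc n (L j u v))"

definition Q :: "nat \<Rightarrow> nat \<Rightarrow> nat \<Rightarrow> (nat \<times> nat, 'a) cpoly" where
  "Q t v k = Phi k (P t v)"

definition C :: "nat \<Rightarrow> nat \<Rightarrow> nat \<Rightarrow> 'a" where "C t u v = fst (L t u v)"
definition A :: "nat \<Rightarrow> nat \<Rightarrow> nat \<Rightarrow> nat \<Rightarrow> 'a" where "A t u v = snd (L t u v)"

lemma Q0: "Q 0 v k = (if k = 0 \<and> v = 0 then 1 else 0)"
  by (simp add: Q_def P_def Phi_one)

lemma QSuc: "Q (Suc t) v k = (\<Sum>u<wd t. Q t u k * Poly_Mapping.single 0 (C (Suc t) u v)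
    + (if k = 0 then 0 else Q t u (k - 1) * lin n k (A (Suc t) u v)))"
  unfolding Q_def P_def C_def A_def by (simp add: Phi_sum Phi_affine)

lemma Q_deg: "t < k \<Longrightarrow> Q t v k = 0"
proof (induction t arbitrary: v k)
  case 0 then show ?case by (simp add: Q0)
next
  case (Suc t)
  then show ?case by (simp add: QSuc)
qed

primrec Cpd :: "nat \<Rightarrow> nat \<Rightarrow> nat \<Rightarrow> nat \<Rightarrow> 'a" where
  "Cpd s 0 u v = (if u = v then 1 else 0)"
| "Cpd s (Suc d) u v = (\<Sum>w<wd (s + d). Cpd s d u w * C (Suc (s + d)) w v)"

fun R :: "nat \<Rightarrow> nat \<Rightarrow> nat \<Rightarrow> (nat \<times> nat, 'a) cpoly" where
  "R 0 s u = (if s = 0 \<and> u = 0 then 1 else 0)"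
| "R (Suc k) s u = (if s = 0 then 0 else (\<Sum>w<wd (s - 1). Q (s - 1) w k * lin n (Suc k) (A s w u)))"

lemma Qexp: "v < wd t \<Longrightarrow> Q t v k = (\<Sum>s\<le>t. \<Sum>u<wd s. R k s u * Poly_Mapping.single 0 (Cpd s (t - s) u v))"
proof (induction t arbitrary: v)
  case 0
  then show ?case using wd0 by (cases k) (auto simp: Q0)
next
  case (Suc t)
  have second: "(\<Sum>u<wd t. (if k = 0 then 0 else Q t u (k - 1) * lin n k (A (Suc t) u v))) = R k (Suc t) v"
    by (cases k) auto
  have first: "(\<Sum>u<wd t. Q t u k * Poly_Mapping.single 0 (C (Suc t) u v))
      = (\<Sum>s\<le>t. \<Sum>u'<wd s. R k s u' * Poly_Mapping.single 0 (Cpd s (Suc t - s) u' v))"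
  proof -
    have "(\<Sum>u<wd t. Q t u k * Poly_Mapping.single 0 (C (Suc t) u v))
       = (\<Sum>u<wd t. (\<Sum>s\<le>t. \<Sum>u'<wd s. R k s u' * Poly_Mapping.single 0 (Cpd s (t - s) u' u)) * Poly_Mapping.single 0 (C (Suc t) u v))"
      using Suc.IH by simp
    also have "\<dots> = (\<Sum>s\<le>t. \<Sum>u'<wd s. R k s u' * (\<Sum>u<wd t. Poly_Mapping.single 0 (Cpd s (t - s) u' u) * Poly_Mapping.single 0 (C (Suc t) u v)))"
      by (simp add: sum_distrib_right sum_distrib_left mult.assoc sum.swap[of _ "{..<wd t}"])
    also have "\<dots> = (\<Sum>s\<le>t. \<Sum>u'<wd s. R k s u' * Poly_Mapping.single 0 (Cpd s (Suc t - s) u' v))"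
    proof (intro sum.cong refl)
      fix s u' assume "s \<in> {..t}"
      then have st: "Suc t - s = Suc (t - s)" "s + (t - s) = t" by auto
      show "R k s u' * (\<Sum>u<wd t. Poly_Mapping.single 0 (Cpd s (t - s) u' u) * Poly_Mapping.single 0 (C (Suc t) u v))
         = R k s u' * Poly_Mapping.single 0 (Cpd s (Suc t - s) u' v)"
        unfolding st(1) Cpd.simps st(2) cc_sum cc_mult ..
    qed
    finally show ?thesis .
  qed
  have last: "(\<Sum>u<wd (Suc t). R k (Suc t) u * Poly_Mapping.single 0 (Cpd (Suc t) (Suc t - Suc t) u v)) = R k (Suc t) v"
  proof -
    have "(\<Sum>u<wd (Suc t). R k (Suc t) u * Poly_Mapping.single 0 (Cpd (Suc t) (Suc t - Suc t) u v))
       = (\<Sum>u<wd (Suc t). if u = v then R k (Suc t) u else 0)"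
      by (intro sum.cong refl) simp
    also have "\<dots> = R k (Suc t) v" using Suc.prems by (simp add: sum.delta')
    finally show ?thesis .
  qed
  have last': "(\<Sum>u<wd (Suc t). R k (Suc t) u * Poly_Mapping.single 0 (Cpd (Suc t) 0 u v)) = R k (Suc t) v"
    using last by simp
  show ?case
    unfolding QSuc sum.distrib first second sum.atMost_Suc
    by (simp only: last' diff_self_eq_0)
qed

definition Edge :: "nat \<Rightarrow> nat \<Rightarrow> nat \<Rightarrow> nat \<Rightarrow> nat \<Rightarrow> 'a" where
  "Edge s u s' v = (\<lambda>i. if s < s' then (\<Sum>w<wd (s' - 1). Cpd s (s' - 1 - s) u w * A s' w v i) else 0)"

lemma Rrec:
  assumes "s' \<le> D"
  shows "R (Suc k) s' v = (\<Sum>s\<le>D. \<Sum>u<wd s. R k s u * lin n (Suc k) (Edge s u s' v))"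
proof (cases s')
  case 0
  then show ?thesis by (simp add: Edge_def)
next
  case (Suc t)
  have "R (Suc k) s' v = (\<Sum>w<wd t. Q t w k * lin n (Suc k) (A s' w v))"
    using Suc by simp
  also have "\<dots> = (\<Sum>w<wd t. (\<Sum>s\<le>t. \<Sum>u<wd s. R k s u * Poly_Mapping.single 0 (Cpd s (t - s) u w)) * lin n (Suc k) (A s' w v))"
    by (intro sum.cong refl) (simp add: Qexp)
  also have "\<dots> = (\<Sum>s\<le>t. \<Sum>u<wd s. R k s u * (\<Sum>w<wd t. Poly_Mapping.single 0 (Cpd s (t - s) u w) * lin n (Suc k) (A s' w v)))"
    by (simp add: sum_distrib_right sum_distrib_left mult.assoc sum.swap[of _ "{..<wd t}"])
  also have "\<dots> = (\<Sum>s\<le>t. \<Sum>u<wd s. R k s u * lin n (Suc k) (Edge s u s' v))"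
    by (intro sum.cong refl) (simp add: cc_lin sum_lin Edge_def Suc)
  also have "\<dots> = (\<Sum>s\<le>D. \<Sum>u<wd s. R k s u * lin n (Suc k) (Edge s u s' v))"
  proof (rule sum.mono_neutral_left)
    show "\<forall>s\<in>{..D} - {..t}. (\<Sum>u<wd s. R k s u * lin n (Suc k) (Edge s u s' v)) = 0"
      using Suc by (auto simp: Edge_def)
  qed (use assms Suc in auto)
  finally show ?thesis .
qed

definition Fin :: "nat \<Rightarrow> nat \<Rightarrow> nat \<Rightarrow> 'a" where
  "Fin s0 u0 = (\<lambda>i. \<Sum>s\<le>D. \<Sum>u<wd s. Edge s0 u0 s u i * Cpd s (D - s) u 0)"

lemma Qfinal: "Q D 0 (Suc k) = (\<Sum>s0\<le>D. \<Sum>u0<wd s0. R k s0 u0 * lin n (Suc k) (Fin s0 u0))"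
proof -
  have fin: "\<And>s0 u0. (\<Sum>s\<le>D. \<Sum>u<wd s. lin n (Suc k) (Edge s0 u0 s u) * Poly_Mapping.single 0 (Cpd s (D - s) u 0)) = lin n (Suc k) (Fin s0 u0)"
    by (simp add: mult.commute[of "lin _ _ _"] cc_lin sum_lin Fin_def) (simp add: mult.commute)
  have "Q D 0 (Suc k) = (\<Sum>s\<le>D. \<Sum>u<wd s. R (Suc k) s u * Poly_Mapping.single 0 (Cpd s (D - s) u 0))"
    using wdD by (simp add: Qexp)
  also have "\<dots> = (\<Sum>s\<le>D. \<Sum>u<wd s. (\<Sum>s0\<le>D. \<Sum>u0<wd s0. R k s0 u0 * lin n (Suc k) (Edge s0 u0 s u)) * Poly_Mapping.single 0 (Cpd s (D - s) u 0))"
    by (intro sum.cong refl) (simp del: R.simps add: Rrec)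
  also have "\<dots> = (\<Sum>s\<le>D. \<Sum>u<wd s. \<Sum>s0\<le>D. \<Sum>u0<wd s0. R k s0 u0 * (lin n (Suc k) (Edge s0 u0 s u) * Poly_Mapping.single 0 (Cpd s (D - s) u 0)))"
    by (simp only: sum_distrib_right mult.assoc)
  also have "\<dots> = (\<Sum>s0\<le>D. \<Sum>u0<wd s0. \<Sum>s\<le>D. \<Sum>u<wd s. R k s0 u0 * (lin n (Suc k) (Edge s0 u0 s u) * Poly_Mapping.single 0 (Cpd s (D - s) u 0)))"
    by (rule quad_swap)
  also have "\<dots> = (\<Sum>s0\<le>D. \<Sum>u0<wd s0. R k s0 u0 * (\<Sum>s\<le>D. \<Sum>u<wd s. lin n (Suc k) (Edge s0 u0 s u) * Poly_Mapping.single 0 (Cpd s (D - s) u 0)))"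
    by (simp only: sum_distrib_left)
  also have "\<dots> = (\<Sum>s0\<le>D. \<Sum>u0<wd s0. R k s0 u0 * lin n (Suc k) (Fin s0 u0))"
    by (simp only: fin)
  finally show ?thesis .
qed

end


context homog begin

definition wdp :: "nat \<Rightarrow> nat \<Rightarrow> nat" where
  "wdp k j = (if j = 0 \<or> j = Suc k then 1 else r * (D + 1))"

definition valid :: "nat \<Rightarrow> bool" where
  "valid e \<longleftrightarrow> e mod r < wd (e div r)"

definition Lp :: "nat \<Rightarrow> nat \<Rightarrow> nat \<Rightarrow> nat \<Rightarrow> nat \<Rightarrow> 'a" where
  "Lp k j e e' = (if valid e then (if j = Suc k then Fin (e div r) (e mod r)
      else Edge (e div r) (e mod r) (e' div r) (e' mod r)) else (\<lambda>i. 0))"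

definition labp :: "nat \<Rightarrow> nat \<Rightarrow> nat \<Rightarrow> nat \<Rightarrow> (nat \<times> nat, 'a) cpoly" where
  "labp k = (\<lambda>j e e'. lin n j (Lp k j e e'))"

lemma labp_apply: "labp k j e e' = lin n j (Lp k j e e')"
  by (simp add: labp_def)

lemma Lp_last: "Lp k (Suc k) e e' = (if valid e then Fin (e div r) (e mod r) else (\<lambda>i. 0))"
  by (simp add: Lp_def)

lemma Lp_mid: "j \<noteq> Suc k \<Longrightarrow> Lp k j e e' = (if valid e then Edge (e div r) (e mod r) (e' div r) (e' mod r) else (\<lambda>i. 0))"
  by (simp add: Lp_def)

lemma valid0: "valid 0" using wd0 by (simp add: valid_def)

lemma layer_sum:
  assumes "j < Suc k"
    and IH: "\<forall>e<wdp k j. valid e \<longrightarrow> fw (wdp k) (labp k) j e = R j (e div r) (e mod r)"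
  shows "(\<Sum>e<wdp k j. fw (wdp k) (labp k) j e * lin n (Suc j) (if valid e then Z (e div r) (e mod r) else (\<lambda>i. 0)))
       = (\<Sum>s\<le>D. \<Sum>u<wd s. R j s u * lin n (Suc j) (Z s u))"
proof (cases "j = 0")
  case True
  have inner: "\<And>s. (\<Sum>u<wd s. R 0 s u * lin n (Suc 0) (Z s u)) = (if s = 0 then lin n (Suc 0) (Z 0 0) else 0)"
    using wd0 by (auto simp: lessThan_Suc)
  have "(\<Sum>s\<le>D. \<Sum>u<wd s. R 0 s u * lin n (Suc 0) (Z s u)) = lin n (Suc 0) (Z 0 0)"
    unfolding inner by (simp add: sum.delta)
  moreover have "(\<Sum>e<wdp k 0. fw (wdp k) (labp k) 0 e * lin n (Suc 0) (if valid e then Z (e div r) (e mod r) else (\<lambda>i. 0)))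
      = lin n (Suc 0) (Z 0 0)"
    using valid0 by (simp add: wdp_def lessThan_Suc)
  ultimately show ?thesis using True by simp
next
  case False
  then have wj: "wdp k j = (D + 1) * r" using assms(1) by (simp add: wdp_def)
  have "(\<Sum>e<wdp k j. fw (wdp k) (labp k) j e * lin n (Suc j) (if valid e then Z (e div r) (e mod r) else (\<lambda>i. 0)))
      = (\<Sum>e<(D + 1) * r. if valid e then R j (e div r) (e mod r) * lin n (Suc j) (Z (e div r) (e mod r)) else 0)"
    unfolding wj using IH wj by (intro sum.cong refl) auto
  also have "\<dots> = (\<Sum>s<D + 1. \<Sum>u<r. if valid (s*r+u) then R j ((s*r+u) div r) ((s*r+u) mod r) * lin n (Suc j) (Z ((s*r+u) div r) ((s*r+u) mod r)) else 0)"
    by (rule sum_div_mod)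
  also have "\<dots> = (\<Sum>s<D + 1. \<Sum>u<r. if u < wd s then R j s u * lin n (Suc j) (Z s u) else 0)"
    using r1 by (intro sum.cong refl) (simp add: valid_def)
  also have "\<dots> = (\<Sum>s\<le>D. \<Sum>u<wd s. R j s u * lin n (Suc j) (Z s u))"
  proof (rule sum.cong)
    show "{..<D + 1} = {..D}" by auto
  next
    fix s assume "s \<in> {..D}"
    then have "wd s \<le> r" using wdr by auto
    then have e: "{u \<in> {..<r}. u < wd s} = {..<wd s}" by auto
    have "(\<Sum>u<r. if u < wd s then R j s u * lin n (Suc j) (Z s u) else 0) = (\<Sum>u\<in>{u \<in> {..<r}. u < wd s}. R j s u * lin n (Suc j) (Z s u))"
      by (rule sum.inter_filter[symmetric]) simp
    then show "(\<Sum>u<r. if u < wd s then R j s u * lin n (Suc j) (Z s u) else 0) = (\<Sum>u<wd s. R j s u * lin n (Suc j) (Z s u))"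
      unfolding e .
  qed
  finally show ?thesis .
qed

lemma fw_claim:
  "j < Suc k \<Longrightarrow> e < wdp k j \<Longrightarrow> valid e \<Longrightarrow> fw (wdp k) (labp k) j e = R j (e div r) (e mod r)"
proof (induction j arbitrary: e)
  case 0
  then show ?case by (simp add: wdp_def)
next
  case (Suc j)
  have jk: "j < Suc k" "Suc j \<noteq> Suc k" using Suc.prems by auto
  have "e < r * (D + 1)" using Suc.prems jk by (simp add: wdp_def)
  then have ed: "e div r \<le> D" using r1
    by (metis Suc_eq_plus1 less_Suc_eq_le less_mult_imp_div_less mult.commute)
  have "fw (wdp k) (labp k) (Suc j) e = (\<Sum>e0<wdp k j. fw (wdp k) (labp k) j e0 *
       lin n (Suc j) (if valid e0 then Edge (e0 div r) (e0 mod r) (e div r) (e mod r) else (\<lambda>i. 0)))"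
    using jk by (simp add: labp_apply Lp_mid)
  also have "\<dots> = (\<Sum>s\<le>D. \<Sum>u<wd s. R j s u * lin n (Suc j) (Edge s u (e div r) (e mod r)))"
    by (rule layer_sum[OF jk(1)]) (use Suc.IH jk in auto)
  also have "\<dots> = R (Suc j) (e div r) (e mod r)"
    by (rule Rrec[OF ed, symmetric])
  finally show ?case .
qed

lemma sml_value: "abp_poly (Suc k) (wdp k) (labp k) = Q D 0 (Suc k)"
proof -
  have "abp_poly (Suc k) (wdp k) (labp k) = fw (wdp k) (labp k) (Suc k) 0"
    by (rule abp_poly_fw) (simp_all add: wdp_def)
  also have "\<dots> = (\<Sum>e<wdp k k. fw (wdp k) (labp k) k e * lin n (Suc k) (if valid e then Fin (e div r) (e mod r) else (\<lambda>i. 0)))"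
    by (simp add: labp_apply Lp_last)
  also have "\<dots> = (\<Sum>s\<le>D. \<Sum>u<wd s. R k s u * lin n (Suc k) (Fin s u))"
    by (rule layer_sum) (use fw_claim in auto)
  also have "\<dots> = Q D 0 (Suc k)" by (rule Qfinal[symmetric])
  finally show ?thesis .
qed

lemma in_sml: "Q D 0 (Suc k) \<in> sml_abp_polys n (r * (D + 1)) (Suc k)"
  unfolding sml_abp_polys_def
proof (intro CollectI exI conjI)
  show "abp_shape (r * (D + 1)) (Suc k) (wdp k)"
    using r1 by (auto simp: abp_shape_def wdp_def)
  show "Q D 0 (Suc k) = abp_poly (Suc k) (wdp k)
     (\<lambda>j u v. \<Sum>i<n. Poly_Mapping.single (Poly_Mapping.single (i, j) 1) (Lp k j u v i))"
    using sml_value by (simp add: labp_def lin_def)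
qed

end

lemma Phi0_eq: "Phi 0 g = Poly_Mapping.single 0 (Poly_Mapping.lookup g 0)"
proof -
  have l0: "\<And>w::nat ncword. length (letters w) = 0 \<longleftrightarrow> w = 0"
    by (metis length_0_conv letters_zero ncword.collapse zero_ncword_def)
  then have l0': "\<And>w::nat ncword. letters w = [] \<longleftrightarrow> w = 0" by simp
  have "Phi 0 g = (\<Sum>w\<in>Poly_Mapping.keys g. if w = 0 then Poly_Mapping.single 0 (Poly_Mapping.lookup g w) else 0)"
    unfolding Phi_def Phi1_def using l0' by (intro sum.cong refl) (auto simp: mon_def)
  also have "\<dots> = Poly_Mapping.single 0 (Poly_Mapping.lookup g 0)"
    by (simp add: sum.delta' in_keys_iff)
  finally show ?thesis .
qed

theorem theorem4p5:
  fixes D n r :: nat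
    and H :: "(nat \<times> nat \<Rightarrow> 'a::field) set"
    and f :: "(nat, 'a) ncpoly"
  assumes "D \<ge> 1" and "n \<ge> 1" and "r \<ge> 1"
    and "H \<noteq> {}"
    and "\<forall>l\<in>{1..D}. hitting_set H (sml_abp_polys n (r * (D + 1)) l)"
    and "nc_abp_computes n r D f"
  shows "f = 0 \<longleftrightarrow>
    (\<forall>A\<in>(\<lambda>h. (\<lambda>i. Xmat D h i)) ` H. is_zero_mat (D + 1) (nc_eval (D + 1) A f))"
proof
  assume "f = 0"
  then show "\<forall>A\<in>(\<lambda>h. (\<lambda>i. Xmat D h i)) ` H. is_zero_mat (D + 1) (nc_eval (D + 1) A f)"
    by (simp add: is_zero_mat_def nc_eval_def)
next
  assume H0: "\<forall>A\<in>(\<lambda>h. (\<lambda>i. Xmat D h i)) ` H. is_zero_mat (D + 1) (nc_eval (D + 1) A f)"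
  obtain wd and L :: "nat \<Rightarrow> nat \<Rightarrow> nat \<Rightarrow> 'a \<times> (nat \<Rightarrow> 'a)" where
    shape: "abp_shape r D wd" and fdef: "f = abp_poly D wd (\<lambda>j u v. affine_nc n (L j u v))"
    using assms(6) unfolding nc_abp_computes_def by blast
  interpret homog n r D wd L
    using shape assms(3) by unfold_locales (auto simp: abp_shape_def)
  have fP: "f = P D 0" unfolding fdef P_def by (rule abp_poly_fw[OF wd0 wdD])
  have ent: "\<And>h k. h \<in> H \<Longrightarrow> k \<le> D \<Longrightarrow> ceval (Phi k f) h = 0"
  proof -
    fix h k assume h: "h \<in> H" and k: "k \<le> D"
    have "is_zero_mat (D + 1) (nc_eval (D + 1) (\<lambda>i. Xmat D h i) f)" using H0 h by auto
    then have "nc_eval (D + 1) (\<lambda>i. Xmat D h i) f 0 k = 0" using k by (simp add: is_zero_mat_def)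
    then show "ceval (Phi k f) h = 0" using entry_Phi[OF k, of h f] by simp
  qed
  have Phi0: "Phi k f = 0" for k
  proof (cases "k \<le> D")
    case False
    then show ?thesis using Q_deg[of D k 0] fP by (simp add: Q_def)
  next
    case True
    show ?thesis
    proof (cases k)
      case 0
      obtain h where h: "h \<in> H" using assms(4) by blast
      have "ceval (Phi 0 f) h = Poly_Mapping.lookup f 0"
        by (simp add: Phi0_eq ceval_single ev_def)
      then have "Poly_Mapping.lookup f 0 = 0" using ent[OF h] by simp
      then show ?thesis using 0 by (simp add: Phi0_eq)
    next
      case (Suc k')
      have mem: "Phi k f \<in> sml_abp_polys n (r * (D + 1)) k"
        using in_sml[of k'] Suc fP by (simp add: Q_def)
      have "hitting_set H (sml_abp_polys n (r * (D + 1)) k)"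
        using assms(5) True Suc by auto
      then show ?thesis using mem ent True unfolding hitting_set_def by blast
    qed
  qed
  show "f = 0"
  proof (rule poly_mapping_eqI)
    fix w
    have "Poly_Mapping.lookup f w = Poly_Mapping.lookup (Phi (length (letters w)) f) (mon w)"
      by (simp add: lookup_Phi_mon)
    then show "Poly_Mapping.lookup f w = Poly_Mapping.lookup 0 w" by (simp add: Phi0)
  qed
qed

end
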